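(* The function $\mathfrak F$ restricted to $[1,\infty)$ is a uniform continuation of the sequence $F$.
   Context: $F$: $F_1=1,F_2=2,F_{n+2}=F_{n+1}+F_n$; $\phi$ golden ratio; $\mathfrak F(x)=\frac{\phi}{\sqrt5}(\phi^x+\phi^{-x}\cos(\pi x)\phi^{-2})$, so $\mathfrak F(n)=F_n$. For an increasing sequence $H$ of positive integers, a continuous function $h:[1,\infty)\to\mathbb{R}$ is a uniform continuation of $H$ if $h(n)=H_n$ for all $n\in\mathbb{N}$ and the functions $h_n:[0,1]\to[0,1]$, $h_n(p)=\frac{h(n+p)-h(n)}{h(n+1)-h(n)}$, converge uniformly on $[0,1]$ to an increasing continuous function. *)

theory Defs
  imports "HOL-Analysis.Analysis"
begin

text \<open>Fibonacci numbers with F 1 = 1, F 2 = 2, F (n+2) = F (n+1) + F n (indexed from 1;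
  the value at 0 is the one forced by the recurrence, F 0 = 1, and is never used).\<close>
fun Fib :: "nat \<Rightarrow> nat" where
  "Fib 0 = 1"
| "Fib (Suc 0) = 1"
| "Fib (Suc (Suc n)) = Fib (Suc n) + Fib n"

definition phi :: real where
  "phi = (1 + sqrt 5) / 2"

definition frakF :: "real \<Rightarrow> real" where
  "frakF x = phi / sqrt 5 * (phi powr x + phi powr (-x) * cos (pi * x) * phi powr (-2))"

definition uniform_continuation :: "(nat \<Rightarrow> real) \<Rightarrow> (real \<Rightarrow> real) \<Rightarrow> bool" where
  "uniform_continuation H h \<longleftrightarrow>
     continuous_on {1..} h \<and>
     (\<forall>n\<ge>1. h (real n) = H n) \<and>
     (\<exists>g. continuous_on {0..1} g \<and> strict_mono_on {0..1} g \<and>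
          uniform_limit {0..1}
            (\<lambda>n p. (h (real n + p) - h (real n)) / (h (real n + 1) - h (real n)))
            g sequentially)"

end

theory Submission
  imports Defs
begin

lemma phi_gt1: "phi > 1" unfolding phi_def
  using real_sqrt_less_iff[of 1 5] by simp
lemma phi_sq: "phi^2 = phi + 1" unfolding phi_def
  by (simp add: power2_eq_square field_simps)

lemma frakF_nat: "frakF (real n) = phi / sqrt 5 * (phi^n + (-1)^n / phi^n / phi^2)"
proof -
  have p: "phi > 0" using phi_gt1 by simp
  show ?thesis unfolding frakF_def
    using p by (simp add: powr_minus powr_realpow divide_inverse)
qed

lemma alg_aux:
  fixes p X s :: real
  assumes "p > 0" "X > 0" "p*p = p+1"
  shows "X*(p*p) + s/(X*(p*p))/(p*p) = (X*p - s/(X*p)/(p*p)) + (X + s/X/(p*p))"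
proof -
  have "X*(p*p) + s/(X*(p*p))/(p*p) - ((X*p - s/(X*p)/(p*p)) + (X + s/X/(p*p)))
     = (X*X*(p*p*p*p*p*p) + s - (X*X*p*p*p*p*p - s*p + X*X*p*p*p*p + s*p*p)) / (X*p*p*p*p)"
    using assms(1,2) by (simp add: field_simps)
  also have "X*X*(p*p*p*p*p*p) + s - (X*X*p*p*p*p*p - s*p + X*X*p*p*p*p + s*p*p) = 0"
    using assms(3) by algebra
  finally show ?thesis by simp
qed

lemma frakF_Fib: "frakF (real n) = real (Fib n)"
proof (induction n rule: Fib.induct)
  case 1
  have p: "phi > 0" using phi_gt1 by simp
  have "frakF (real 0) = phi / sqrt 5 * (1 + 1 / phi^2)" by (simp only: frakF_nat) simp
  also have "phi / sqrt 5 * (1 + 1 / phi^2) = (phi^2 + 1) / (phi * sqrt 5)"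
    using p by (simp add: field_simps power2_eq_square)
  also have "... = 1" unfolding phi_def using real_sqrt_ge_zero[of 5] by (simp add: field_simps power2_eq_square add_nonneg_eq_0_iff)
  finally show ?case by simp
next
  case 2
  have p: "phi > 0" using phi_gt1 by simp
  have "frakF (real 1) = phi / sqrt 5 * (phi - 1 / phi / phi^2)" by (simp only: frakF_nat) simp
  also have "phi / sqrt 5 * (phi - 1 / phi / phi^2) = (phi^4 - 1) / (phi^2 * sqrt 5)"
    using p by (simp add: field_simps power2_eq_square power4_eq_xxxx)
  also have "... = 1" unfolding phi_def using real_sqrt_ge_zero[of 5] by (simp add: field_simps power2_eq_square add_nonneg_eq_0_iff power4_eq_xxxx)
  finally show ?case by simp
next
  case (3 n)
  have p: "phi > 0" using phi_gt1 by simp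
  have key: "phi^(Suc (Suc n)) + (-1)^(Suc (Suc n)) / phi^(Suc (Suc n)) / phi^2
     = (phi^(Suc n) + (-1)^(Suc n) / phi^(Suc n) / phi^2) + (phi^n + (-1)^n / phi^n / phi^2)"
  proof -
    have e: "phi^2 = phi + 1" by (rule phi_sq)
    have "phi^(Suc (Suc n)) = phi^n * (phi*phi)" "phi^(Suc n) = phi^n * phi" "phi^2 = phi*phi"
      by (simp_all add: power2_eq_square)
    moreover have "(-1::real)^(Suc (Suc n)) = (-1)^n" "(-1::real)^(Suc n) = -((-1)^n)" by simp_all
    ultimately show ?thesis using alg_aux[of phi "phi^n" "(-1)^n"] p e
      by (simp only: power2_eq_square minus_divide_left diff_conv_add_uminus) simp
  qed
  have "frakF (real (Suc (Suc n))) = frakF (real (Suc n)) + frakF (real n)"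
    unfolding frakF_nat key by (simp add: algebra_simps)
  then show ?case using 3 by simp
qed

lemma abs_aux:
  fixes a x y g M :: real
  assumes "a > 0" "\<bar>x\<bar> \<le> M" "\<bar>y\<bar> \<le> M" "0 \<le> g" "g \<le> 1" "2*M \<le> a"
  shows "\<bar>(a*g + x)/(a+y) - g\<bar> \<le> 4*M/a"
proof -
  have ay: "a + y \<ge> a/2" using assms by linarith
  hence ay0: "a + y > 0" using assms by linarith
  have "(a*g + x)/(a+y) - g = (x - g*y)/(a+y)" using ay0 by (simp add: field_simps)
  also have "\<bar>...\<bar> = \<bar>x - g*y\<bar>/(a+y)" using ay0 by simp
  also have "... \<le> (2*M)/(a/2)"
  proof (rule frac_le)
    have "\<bar>g*y\<bar> \<le> M" using assms
      by (metis abs_ge_zero abs_of_nonneg abs_mult mult_left_le_one_le order_trans)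
    thus "\<bar>x - g*y\<bar> \<le> 2*M" using assms(2) by linarith
  qed (use assms ay in auto)
  also have "... = 4*M/a" by simp
  finally show ?thesis .
qed

definition A0 :: real where "A0 = phi / sqrt 5"

lemma A0_pos: "A0 > 0" unfolding A0_def using phi_gt1 by simp

lemma R_bound:
  assumes "x \<ge> real n"
  shows "\<bar>frakF x - A0 * phi powr x\<bar> \<le> A0 / phi^n"
proof -
  have p: "phi > 1" by (rule phi_gt1)
  have q: "phi powr (-2) \<le> 1" using powr_mono[of "-2" 0 phi] p by simp
  have r: "phi powr (-x) \<le> phi powr (- real n)"
    using p assms by (intro powr_mono) auto
  have c: "\<bar>cos (pi*x)\<bar> \<le> 1" by simp
  have "frakF x - A0 * phi powr x = A0 * (phi powr (-x) * cos (pi*x) * phi powr (-2))"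
    unfolding frakF_def A0_def by (simp add: algebra_simps)
  also have "\<bar>...\<bar> = A0 * (phi powr (-x) * \<bar>cos (pi*x)\<bar> * phi powr (-2))"
    using A0_pos by (simp add: abs_mult)
  also have "... \<le> A0 * (phi powr (- real n) * 1 * 1)"
    using A0_pos p q r c
    by (intro mult_left_mono mult_mono) auto
  also have "phi powr (- real n) = 1 / phi^n" using p by (simp add: powr_minus powr_realpow divide_inverse)
  finally show ?thesis by simp
qed


definition g0 :: "real \<Rightarrow> real" where "g0 p = (phi powr p - 1) / (phi - 1)"

lemma step_bound:
  fixes n :: nat and p :: real
  assumes p: "0 \<le> p" "p \<le> 1" and cond: "4 * (inverse (phi^n) * inverse (phi^n)) \<le> phi - 1"
  shows "\<bar>(frakF (real n + p) - frakF (real n)) / (frakF (real n + 1) - frakF (real n)) - g0 p\<bar>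
         \<le> 8 * (inverse (phi^n) * inverse (phi^n)) / (phi - 1)"
proof -
  have ph: "phi > 1" by (rule phi_gt1)
  define R where "R y = frakF y - A0 * phi powr y" for y
  define a where "a = A0 * phi^n * (phi - 1)"
  define M where "M = 2 * A0 / phi^n"
  have apos: "a > 0" unfolding a_def using A0_pos ph by simp
  have pn: "phi powr real n = phi^n" using ph by (simp add: powr_realpow)
  have g01: "g0 1 = 1" unfolding g0_def using ph by simp
  have gge: "0 \<le> g0 p" unfolding g0_def using ph p powr_mono[of 0 p phi] by simp
  have gle: "g0 p \<le> 1" unfolding g0_def using ph p powr_mono[of p 1 phi] by simp
  have agp: "a * g0 q = A0 * (phi powr (real n + q) - phi powr real n)" for q
    unfolding a_def g0_def using ph by (simp add: powr_add pn field_simps)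
  have num: "frakF (real n + q) - frakF (real n) = a * g0 q + (R (real n + q) - R (real n))" for q
    unfolding agp R_def by (simp add: algebra_simps)
  have Rb: "\<bar>R (real n + q) - R (real n)\<bar> \<le> M" if "q \<ge> 0" for q
  proof -
    have "\<bar>R (real n + q)\<bar> \<le> A0 / phi^n" unfolding R_def by (rule R_bound) (use that in simp)
    moreover have "\<bar>R (real n)\<bar> \<le> A0 / phi^n" unfolding R_def by (rule R_bound) simp
    ultimately show ?thesis unfolding M_def by linarith
  qed
  have MA: "2 * M \<le> a"
  proof -
    have "2 * M = A0 * (4 * (inverse (phi^n) * inverse (phi^n))) * phi^n"
      unfolding M_def using ph by (simp add: field_simps)
    also have "... \<le> A0 * (phi - 1) * phi^n"
      using cond A0_pos ph by (intro mult_right_mono mult_left_mono) auto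
    finally show ?thesis unfolding a_def by (simp add: algebra_simps)
  qed
  have "\<bar>(a * g0 p + (R (real n + p) - R (real n))) / (a + (R (real n + 1) - R (real n))) - g0 p\<bar>
        \<le> 4 * M / a"
    by (rule abs_aux) (use apos Rb p gge gle MA in auto)
  also have "4 * M / a = 8 * (inverse (phi^n) * inverse (phi^n)) / (phi - 1)"
    unfolding M_def a_def using A0_pos ph by (simp add: field_simps)
  finally show ?thesis using num[of p] num[of 1] g01 by simp
qed


theorem lemma5p2:
  shows "uniform_continuation (\<lambda>n. real (Fib n)) frakF"
  unfolding uniform_continuation_def
proof (intro conjI allI impI exI)
  have ph: "phi > 1" by (rule phi_gt1)
  show "continuous_on {1..} frakF"
    unfolding frakF_def by (intro continuous_intros) (use ph in auto)
  show "frakF (real n) = real (Fib n)" for n by (rule frakF_Fib)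
  show "continuous_on {0..1} g0"
    unfolding g0_def by (intro continuous_intros) (use ph in auto)
  show "strict_mono_on {0..1} g0"
  proof (rule strict_mono_onI)
    fix r s :: real assume "r < s"
    hence "phi powr r < phi powr s" using ph by (intro powr_less_mono) auto
    thus "g0 r < g0 s" unfolding g0_def using ph by (intro divide_strict_right_mono) auto
  qed
  define t where "t n = inverse (phi ^ n) * inverse (phi ^ n)" for n :: nat
  have t0: "t \<longlonglongrightarrow> 0"
    unfolding t_def using tendsto_mult[OF LIMSEQ_inverse_realpow_zero[OF ph] LIMSEQ_inverse_realpow_zero[OF ph]]
    by simp
  have ev1: "\<forall>\<^sub>F n in sequentially. 4 * t n \<le> phi - 1"
  proof -
    have "\<forall>\<^sub>F n in sequentially. t n < (phi - 1) / 4"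
      using order_tendstoD(2)[OF t0, of "(phi - 1)/4"] ph by simp
    thus ?thesis by eventually_elim simp
  qed
  show "uniform_limit {0..1}
     (\<lambda>n p. (frakF (real n + p) - frakF (real n)) / (frakF (real n + 1) - frakF (real n))) g0 sequentially"
  proof (rule uniform_limitI)
    fix e :: real assume e: "e > 0"
    have "(\<lambda>n. 8 * t n / (phi - 1)) \<longlonglongrightarrow> 8 * 0 / (phi - 1)"
      by (intro tendsto_intros t0) (use ph in auto)
    hence "\<forall>\<^sub>F n in sequentially. 8 * t n / (phi - 1) < e"
      using order_tendstoD(2) e by fastforce
    with ev1 show "\<forall>\<^sub>F n in sequentially. \<forall>p\<in>{0..1}. dist
       ((frakF (real n + p) - frakF (real n)) / (frakF (real n + 1) - frakF (real n))) (g0 p) < e"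
    proof eventually_elim
      case (elim n)
      show ?case
      proof
        fix p :: real assume "p \<in> {0..1}"
        hence "\<bar>(frakF (real n + p) - frakF (real n)) / (frakF (real n + 1) - frakF (real n)) - g0 p\<bar>
         \<le> 8 * t n / (phi - 1)"
          using step_bound[of p n] elim(1) unfolding t_def by auto
        thus "dist ((frakF (real n + p) - frakF (real n)) / (frakF (real n + 1) - frakF (real n))) (g0 p) < e"
          using elim(2) by (simp add: dist_real_def)
      qed
    qed
  qed
qed

end
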